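(* Let $N>0$ be real and $n\ge0$ an integer. Let $X$ be a real random variable whose probability density is proportional to \[ f_{n,N}(X)=\left(1+\frac{X^2}{N}\right)^{-(N+1+n)}\bigl(H_n^N(X)\bigr)^2,\qquad X\in\mathbb{R}. \] Then the random variable \[ Y=\frac{X/\sqrt{N}}{\sqrt{1+\frac{X^{2}}{N}}} \] has, on $(-1,1)$, a probability density proportional to \[ g_{n,\nu}(Y)=(1-Y^2)^{\nu-\frac12}\bigl(C_n^{\nu}(Y)\bigr)^2\quad\text{with }\nu=N. \]
   Context: For $N>0$ and integer $n\ge0$, the relativistic Hermite polynomial is $H_n^N(X)=(-1)^n(1+\frac{X^2}{N})^{N+n}\frac{d^n}{dX^n}(1+\frac{X^2}{N})^{-N}$. For $\nu\neq0$, the Gegenbauer polynomial is $C_n^{\nu}(X)=\alpha_{n,\nu}(-1)^n(1-X^2)^{\frac12-\nu}\frac{d^n}{dX^n}(1-X^2)^{n+\nu-\frac12}$ with $\alpha_{n,\nu}=\frac{(2\nu)_n}{2^n n!(\nu+\frac12)_n}$, $(a)_n$ the Pochhammer symbol. Equivalently $f_{n,N}=|h_n^N|^2$ with $h_n^N(X)=(1+\frac{X^2}{N})^{-\frac{N+1+n}{2}}H_n^N(X)$ and $g_{n,\nu}=|\mathfrak{c}_n^{\nu}|^2$ with $\mathfrak{c}_n^{\nu}(Y)=(1-Y^2)^{\frac{\nu}{2}-\frac14}C_n^{\nu}(Y)$. *)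

theory Defs
  imports "HOL-Probability.Probability"
begin

definition rel_hermite :: "real \<Rightarrow> nat \<Rightarrow> real \<Rightarrow> real" where
  "rel_hermite N n x =
     (-1) ^ n * (1 + x\<^sup>2 / N) powr (N + real n) *
     (deriv ^^ n) (\<lambda>t. (1 + t\<^sup>2 / N) powr (- N)) x"

definition gegenbauer_alpha :: "real \<Rightarrow> nat \<Rightarrow> real" where
  "gegenbauer_alpha \<nu> n =
     pochhammer (2 * \<nu>) n / (2 ^ n * fact n * pochhammer (\<nu> + 1/2) n)"

definition gegenbauer :: "real \<Rightarrow> nat \<Rightarrow> real \<Rightarrow> real" where
  "gegenbauer \<nu> n x =
     gegenbauer_alpha \<nu> n * (-1) ^ n * (1 - x\<^sup>2) powr (1/2 - \<nu>) *
     (deriv ^^ n) (\<lambda>t. (1 - t\<^sup>2) powr (real n + \<nu> - 1/2)) x"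

definition f_rel :: "nat \<Rightarrow> real \<Rightarrow> real \<Rightarrow> real" where
  "f_rel n N x = (1 + x\<^sup>2 / N) powr (- (N + 1 + real n)) * (rel_hermite N n x)\<^sup>2"

definition g_geg :: "nat \<Rightarrow> real \<Rightarrow> real \<Rightarrow> real" where
  "g_geg n \<nu> y = (1 - y\<^sup>2) powr (\<nu> - 1/2) * (gegenbauer \<nu> n y)\<^sup>2"

end

theory Submission
  imports Defs "HOL-Computational_Algebra.Polynomial"
begin

definition hdf :: "(real \<Rightarrow> real) \<Rightarrow> real set \<Rightarrow> (nat \<Rightarrow> real \<Rightarrow> real) \<Rightarrow> bool" where
  "hdf f S F \<longleftrightarrow> (\<forall>x\<in>S. F 0 x = f x) \<and> (\<forall>k. \<forall>x\<in>S. (F k has_real_derivative F (Suc k) x) (at x))"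

lemma hd_deriv:
  assumes "open S" "hdf f S F"
  shows "x \<in> S \<Longrightarrow> (deriv ^^ k) f x = F k x"
proof (induction k arbitrary: x)
  case 0 then show ?case using assms by (simp add: hdf_def)
next
  case (Suc k)
  have "((deriv ^^ k) f has_real_derivative F (Suc k) x) (at x)"
    apply (rule has_field_derivative_transform_within_open[of "F k" _ _ S])
    using assms Suc by (auto simp: hdf_def)
  then show ?case by (simp add: DERIV_imp_deriv)
qed

lemma hd_unique:
  assumes "open S" "hdf f S F" "hdf f S G" "x \<in> S"
  shows "F k x = G k x"
  using hd_deriv[OF assms(1,2) assms(4)] hd_deriv[OF assms(1,3) assms(4)] by simp

lemma hd_cong: "hdf f S F \<Longrightarrow> (\<And>x. x \<in> S \<Longrightarrow> g x = f x) \<Longrightarrow> hdf g S F"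
  by (simp add: hdf_def)

lemma hd_shift: "hdf f S F \<Longrightarrow> hdf (F 1) S (\<lambda>k. F (Suc k))"
  by (simp add: hdf_def)

lemma hd_cmult: "hdf f S F \<Longrightarrow> hdf (\<lambda>x. c * f x) S (\<lambda>k x. c * F k x)"
  by (auto simp: hdf_def intro!: derivative_eq_intros)

lemma hd_xmult:
  assumes "hdf f S F"
  shows "hdf (\<lambda>x. x * f x) S (\<lambda>k x. x * F k x + real k * F (k - 1) x)"
  unfolding hdf_def
proof (intro conjI ballI allI)
  fix x assume "x \<in> S" then show "x * F 0 x + real 0 * F (0 - 1) x = x * f x"
    using assms by (simp add: hdf_def)
next
  fix k x assume x: "x \<in> S"
  have d: "\<And>j. (F j has_real_derivative F (Suc j) x) (at x)" using assms x by (simp add: hdf_def)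
  show "((\<lambda>x. x * F k x + real k * F (k - 1) x) has_real_derivative
          x * F (Suc k) x + real (Suc k) * F (Suc k - 1) x) (at x)"
  proof (cases k)
    case 0 then show ?thesis
      by (auto intro!: derivative_eq_intros d simp: algebra_simps)
  next
    case (Suc j) then show ?thesis
      by (auto intro!: derivative_eq_intros d simp: algebra_simps)
  qed
qed

lemma hd_qmult:
  assumes "hdf f S F"
  shows "hdf (\<lambda>x. (1 - x\<^sup>2) * f x) S
     (\<lambda>k x. (1 - x\<^sup>2) * F k x - 2 * real k * x * F (k - 1) x - real k * (real k - 1) * F (k - 2) x)"
  unfolding hdf_def
proof (intro conjI ballI allI)
  fix x assume "x \<in> S" then show "(1 - x\<^sup>2) * F 0 x - 2 * real 0 * x * F (0 - 1) x - real 0 * (real 0 - 1) * F (0 - 2) x = (1 - x\<^sup>2) * f x"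
    using assms by (simp add: hdf_def)
next
  fix k x assume x: "x \<in> S"
  have d: "\<And>j. (F j has_real_derivative F (Suc j) x) (at x)" using assms x by (simp add: hdf_def)
  show "((\<lambda>x. (1 - x\<^sup>2) * F k x - 2 * real k * x * F (k - 1) x - real k * (real k - 1) * F (k - 2) x) has_real_derivative
     (1 - x\<^sup>2) * F (Suc k) x - 2 * real (Suc k) * x * F (Suc k - 1) x - real (Suc k) * (real (Suc k) - 1) * F (Suc k - 2) x) (at x)"
  proof (cases k)
    case 0 then show ?thesis
      by (auto intro!: derivative_eq_intros d simp: algebra_simps)
  next
    case (Suc j) note j = this
    show ?thesis
    proof (cases j)
      case 0 then show ?thesis using j
        by (auto intro!: derivative_eq_intros d simp: algebra_simps power2_eq_square)
    next
      case (Suc i) then show ?thesis using j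
        by (auto intro!: derivative_eq_intros d simp: algebra_simps power2_eq_square)
    qed
  qed
qed


primrec gp :: "real \<Rightarrow> nat \<Rightarrow> real poly" where
  "gp s 0 = 1"
| "gp s (Suc k) = [:1,0,-1:] * pderiv (gp s k) - smult (2 * (s - real k)) ([:0,1:] * gp s k)"

definition GF :: "real \<Rightarrow> nat \<Rightarrow> real \<Rightarrow> real" where
  "GF s k y = poly (gp s k) y * (1 - y\<^sup>2) powr (s - real k)"

lemma poly_quad: "poly [:1,0,-1:] (y::real) = 1 - y\<^sup>2" by (simp add: power2_eq_square)

lemma hd_G: "hdf (\<lambda>t. (1 - t\<^sup>2) powr s) {-1<..<1} (GF s)"
  unfolding hdf_def
proof (intro conjI ballI allI)
  fix x :: real assume "x \<in> {-1<..<1}" then show "GF s 0 x = (1 - x\<^sup>2) powr s" by (simp add: GF_def)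
next
  fix k and y :: real assume y: "y \<in> {-1<..<1}"
  then have w: "1 - y\<^sup>2 > 0" by (simp add: abs_square_less_1 abs_less_iff)
  have "((\<lambda>y. poly (gp s k) y * (1 - y\<^sup>2) powr (s - real k)) has_real_derivative
      poly (pderiv (gp s k)) y * (1 - y\<^sup>2) powr (s - real k)
      + poly (gp s k) y * ((s - real k) * (1 - y\<^sup>2) powr (s - real k - 1) * (- (2 * y)))) (at y)"
    using w by (auto intro!: derivative_eq_intros simp: power2_eq_square)
  moreover have "poly (pderiv (gp s k)) y * (1 - y\<^sup>2) powr (s - real k)
      + poly (gp s k) y * ((s - real k) * (1 - y\<^sup>2) powr (s - real k - 1) * (- (2 * y)))
      = GF s (Suc k) y"
  proof -
    have e: "(1 - y\<^sup>2) powr (s - real k) = (1 - y\<^sup>2) * (1 - y\<^sup>2) powr (s - real k - 1)"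
      using w by (simp add: powr_diff)
    show ?thesis unfolding GF_def e
      by (simp add: poly_quad algebra_simps power2_eq_square)
  qed
  ultimately show "(GF s k has_real_derivative GF s (Suc k) y) (at y)"
    unfolding GF_def by simp
qed


lemma S_pos: "(y::real) \<in> {-1<..<1} \<Longrightarrow> 1 - y\<^sup>2 > 0"
  by (simp add: abs_square_less_1 abs_less_iff)

lemma GF_ident:
  assumes s: "s > -1" and y: "y \<in> {-1<..<1}"
  shows "(1 - y\<^sup>2) * GF s (Suc n) y - real (Suc n) * y * GF s n y
       = (1 - real (Suc n) / (2 * (s + 1))) * GF (s + 1) (Suc n) y"
proof -
  let ?S = "{-1<..<1::real}"
  have o: "open ?S" by simp
  have h1: "hdf (\<lambda>x. x * (1 - x\<^sup>2) powr s) ?S (\<lambda>k x. x * GF s k x + real k * GF s (k - 1) x)"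
    by (rule hd_xmult[OF hd_G])
  have h2: "hdf (\<lambda>x. x * (1 - x\<^sup>2) powr s) ?S (\<lambda>k x. (-1/(2*(s+1))) * GF (s+1) (Suc k) x)"
  proof (rule hd_cong[OF hd_cmult[OF hd_shift[OF hd_G]]])
    fix x :: real assume "x \<in> ?S"
    show "x * (1 - x\<^sup>2) powr s = -1/(2*(s+1)) * GF (s+1) 1 x"
    proof -
      have "s + 1 \<noteq> 0" using s by simp
      then show ?thesis by (simp add: GF_def field_simps)
    qed
  qed
  have h3: "hdf (\<lambda>x. (1 - x\<^sup>2) * (1 - x\<^sup>2) powr s) ?S
     (\<lambda>k x. (1 - x\<^sup>2) * GF s k x - 2 * real k * x * GF s (k - 1) x - real k * (real k - 1) * GF s (k - 2) x)"
    by (rule hd_qmult[OF hd_G])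
  have h4: "hdf (\<lambda>x. (1 - x\<^sup>2) * (1 - x\<^sup>2) powr s) ?S (GF (s+1))"
  proof (rule hd_cong[OF hd_G])
    fix x :: real assume "x \<in> ?S"
    then have "1 - x\<^sup>2 > 0" by (rule S_pos)
    then show "(1 - x\<^sup>2) * (1 - x\<^sup>2) powr s = (1 - x\<^sup>2) powr (s + 1)"
      by (simp add: powr_add)
  qed
  have a: "y * GF s n y + real n * GF s (n - 1) y = (-1/(2*(s+1))) * GF (s+1) (Suc n) y"
    using hd_unique[OF o h1 h2 y, of n] by simp
  have b: "(1 - y\<^sup>2) * GF s (Suc n) y - 2 * real (Suc n) * y * GF s n y - real (Suc n) * real n * GF s (n - 1) y
       = GF (s+1) (Suc n) y"
    using hd_unique[OF o h3 h4 y, of "Suc n"] by simp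
  have "(1 - y\<^sup>2) * GF s (Suc n) y - real (Suc n) * y * GF s n y
     = GF (s+1) (Suc n) y + real (Suc n) * (y * GF s n y + real n * GF s (n - 1) y)"
    using b by (simp add: algebra_simps)
  also have "\<dots> = (1 - real (Suc n) / (2 * (s + 1))) * GF (s + 1) (Suc n) y"
    unfolding a using s by (simp add: field_simps)
  finally show ?thesis .
qed

definition qq :: "real \<Rightarrow> nat \<Rightarrow> real poly" where
  "qq N n = gp (real n + N - 1/2) n"

definition cc :: "real \<Rightarrow> nat \<Rightarrow> real" where
  "cc N n = (2 * N + real n) / (2 * real n + 2 * N + 1)"

lemma qq_ident:
  assumes N: "N > 0" and y: "y \<in> {-1<..<1}"
  shows "(1 - y\<^sup>2) * poly (pderiv (qq N n)) y - (2 * N + real n) * y * poly (qq N n) y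
       = cc N n * poly (qq N (Suc n)) y"
proof -
  define s where "s = real n + N - 1/2"
  have s: "s > -1" using N by (simp add: s_def)
  have w: "1 - y\<^sup>2 > 0" using y by (rule S_pos)
  have e1: "s - real (Suc n) = (N - 1/2) - 1" by (simp add: s_def)
  have e2: "s - real n = N - 1/2" by (simp add: s_def)
  have e3: "s + 1 - real (Suc n) = N - 1/2" by (simp add: s_def)
  have q1: "qq N (Suc n) = gp (s + 1) (Suc n)" by (simp add: qq_def s_def algebra_simps)
  have q0: "qq N n = gp s n" by (simp add: qq_def s_def)
  have pw: "(1 - y\<^sup>2) * (1 - y\<^sup>2) powr (N - 1/2 - 1) = (1 - y\<^sup>2) powr (N - 1/2)"
  proof -
    have "(1 - y\<^sup>2) powr (N - 1/2) = (1 - y\<^sup>2) powr ((N - 1/2 - 1) + 1)" by simp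
    also have "\<dots> = (1 - y\<^sup>2) powr (N - 1/2 - 1) * (1 - y\<^sup>2)"
      using w by (simp only: powr_add powr_one)
    finally show ?thesis by simp
  qed
  define V where "V = (1 - y\<^sup>2) powr (N - 1/2 - 1)"
  define W where "W = (1 - y\<^sup>2) powr (N - 1/2)"
  have W: "W > 0" using w by (simp add: W_def)
  have VW: "(1 - y\<^sup>2) * V = W" using pw by (simp add: V_def W_def)
  have P1: "poly (gp s (Suc n)) y = (1 - y\<^sup>2) * poly (pderiv (qq N n)) y - 2 * (N - 1/2) * y * poly (qq N n) y"
    unfolding gp.simps(2) q0 e2 by (simp add: poly_quad; simp add: power2_eq_square left_diff_distrib)
  have c: "1 - real (Suc n) / (2 * (s + 1)) = cc N n"
    using N by (simp add: cc_def s_def field_simps)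
  from GF_ident[OF s y, of n]
  have "(1 - y\<^sup>2) * (poly (gp s (Suc n)) y * V) - real (Suc n) * y * (poly (qq N n) y * W)
      = cc N n * (poly (qq N (Suc n)) y * W)"
    unfolding GF_def e1 e2 e3 q1[symmetric] q0[symmetric] c V_def[symmetric] W_def[symmetric] .
  then have "(poly (gp s (Suc n)) y - real (Suc n) * y * poly (qq N n) y) * W
      = (cc N n * poly (qq N (Suc n)) y) * W"
  proof -
    have "(1 - y\<^sup>2) * (poly (gp s (Suc n)) y * V) = poly (gp s (Suc n)) y * W"
      using VW by (metis mult.assoc mult.commute)
    then show ?thesis using \<open>_ = cc N n * (poly (qq N (Suc n)) y * W)\<close> by (simp add: algebra_simps)
  qed
  then have "poly (gp s (Suc n)) y - real (Suc n) * y * poly (qq N n) y = cc N n * poly (qq N (Suc n)) y"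
    using W by simp
  then show ?thesis unfolding P1 by (simp add: algebra_simps)
qed


lemma alg1:
  fixes sN sP x :: real
  assumes "sN > 0" "sP > 0" "sN * sN = N" "sP * sP = 1 + x\<^sup>2 / N"
  shows "(1 / sN * sP - x / sN * (inverse sP / 2 * (2 * x / N))) / (sP * sP) = 1 / (sN * (1 + x\<^sup>2 / N) * sP)"
proof -
  have N: "N > 0" using assms by (metis mult_pos_pos)
  have a: "x / sN * (inverse sP / 2 * (2 * x / N)) = (x\<^sup>2 / N) / (sN * sP)"
    using assms N by (simp add: field_simps power2_eq_square)
  have b: "1 / sN * sP = (sP * sP) / (sN * sP)" using assms(1,2) by (simp add: field_simps)
  have "1 / sN * sP - x / sN * (inverse sP / 2 * (2 * x / N)) = (sP * sP - x\<^sup>2 / N) / (sN * sP)"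
    unfolding a b by (simp add: diff_divide_distrib)
  also have "\<dots> = 1 / (sN * sP)" using assms by simp
  finally have e: "1 / sN * sP - x / sN * (inverse sP / 2 * (2 * x / N)) = 1 / (sN * sP)" .
  show ?thesis unfolding e assms(4)[symmetric] using assms(1,2) by (simp add: field_simps)
qed

definition ph :: "real \<Rightarrow> real \<Rightarrow> real" where
  "ph N x = (x / sqrt N) / sqrt (1 + x\<^sup>2 / N)"

lemma u_pos: "N > 0 \<Longrightarrow> 1 + x\<^sup>2 / N > (0::real)"
  by (simp add: add_pos_nonneg)

lemma dP: "N > 0 \<Longrightarrow> ((\<lambda>x. 1 + x\<^sup>2 / N) has_real_derivative 2 * x / N) (at (x::real))"
  by (auto intro!: derivative_eq_intros)

lemma ph_deriv:
  assumes N: "N > 0"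
  shows "(ph N has_real_derivative 1 / (sqrt N * (1 + x\<^sup>2 / N) * sqrt (1 + x\<^sup>2 / N))) (at x)"
proof -
  have P: "1 + x\<^sup>2 / N > 0" using u_pos[OF N] .
  have d2: "((\<lambda>x. sqrt (1 + x\<^sup>2 / N)) has_real_derivative inverse (sqrt (1 + x\<^sup>2 / N)) / 2 * (2 * x / N)) (at x)"
    by (rule DERIV_chain2[OF DERIV_real_sqrt[OF P] dP[OF N]])
  have d3: "((\<lambda>x. x / sqrt N) has_real_derivative 1 / sqrt N) (at x)"
    using DERIV_cdivide[OF DERIV_ident, where c = "sqrt N"] by simp
  have "(ph N has_real_derivative
      (1 / sqrt N * sqrt (1 + x\<^sup>2 / N) - x / sqrt N * (inverse (sqrt (1 + x\<^sup>2 / N)) / 2 * (2 * x / N)))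
        / (sqrt (1 + x\<^sup>2 / N) * sqrt (1 + x\<^sup>2 / N))) (at x)"
    unfolding ph_def by (rule DERIV_divide[OF d3 d2]) (use P in simp)
  moreover have "(1 / sqrt N * sqrt (1 + x\<^sup>2 / N) - x / sqrt N * (inverse (sqrt (1 + x\<^sup>2 / N)) / 2 * (2 * x / N)))
        / (sqrt (1 + x\<^sup>2 / N) * sqrt (1 + x\<^sup>2 / N)) = 1 / (sqrt N * (1 + x\<^sup>2 / N) * sqrt (1 + x\<^sup>2 / N))"
    by (rule alg1) (use N P in auto)
  ultimately show ?thesis by simp
qed

lemma ph_sq:
  assumes N: "N > 0"
  shows "1 - (ph N x)\<^sup>2 = 1 / (1 + x\<^sup>2 / N)"
proof -
  have P: "1 + x\<^sup>2 / N > 0" using u_pos[OF N] .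
  have "(ph N x)\<^sup>2 = (x\<^sup>2 / N) / (1 + x\<^sup>2 / N)"
    unfolding ph_def using N P by (simp add: power_divide power_mult_distrib real_sqrt_pow2)
  moreover have "1 - (x\<^sup>2 / N) / (1 + x\<^sup>2 / N) = ((1 + x\<^sup>2 / N) - x\<^sup>2 / N) / (1 + x\<^sup>2 / N)"
    unfolding diff_divide_distrib using P by simp
  moreover have "(1 + x\<^sup>2 / N) - x\<^sup>2 / N = 1" by simp
  ultimately show ?thesis by (simp only:)
qed

lemma ph_range:
  assumes N: "N > 0"
  shows "ph N x \<in> {-1<..<1}"
proof -
  have "1 - (ph N x)\<^sup>2 > 0" unfolding ph_sq[OF N] using u_pos[OF N] by simp
  then have "\<bar>ph N x\<bar> < 1" by (simp add: abs_square_less_1)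
  then show ?thesis by (simp add: abs_less_iff)
qed

lemma alg2:
  fixes sN sP A x Q Qd :: real and k :: nat
  assumes "sN > 0" "sP > 0"
  shows "A * (Qd * (1 / (sN * (sP * sP) * sP))) + ((- (sN * sN) - real k / 2) * (A / (sP * sP)) * (2 * x / (sN * sN))) * Q
     = (1 / sN) * (A / sP) * ((1 / (sP * sP)) * Qd - (2 * (sN * sN) + real k) * (x / sN / sP) * Q)"
  using assms by (simp add: field_simps)

primrec LL :: "real \<Rightarrow> nat \<Rightarrow> real" where
  "LL N 0 = 1"
| "LL N (Suc k) = LL N k * cc N k / sqrt N"

definition EF :: "real \<Rightarrow> nat \<Rightarrow> real \<Rightarrow> real" where
  "EF N k x = LL N k * ((1 + x\<^sup>2 / N) powr (- N - real k / 2) * poly (qq N k) (ph N x))"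

lemma hd_E:
  assumes N: "N > 0"
  shows "hdf (\<lambda>t. (1 + t\<^sup>2 / N) powr (- N)) UNIV (EF N)"
  unfolding hdf_def
proof (intro conjI ballI allI)
  fix x :: real show "EF N 0 x = (1 + x\<^sup>2 / N) powr (- N)" by (simp add: EF_def qq_def)
next
  fix k and x :: real
  define P where "P = 1 + x\<^sup>2 / N"
  define r where "r = - N - real k / 2"
  define y where "y = ph N x"
  have P: "P > 0" using u_pos[OF N] by (simp add: P_def)
  have y: "y \<in> {-1<..<1}" using ph_range[OF N] by (simp add: y_def)
  have d1: "((\<lambda>x. (1 + x\<^sup>2 / N) powr r) has_real_derivative r * P powr (r - 1) * (2 * x / N)) (at x)"
    using DERIV_fun_powr[OF dP[OF N, of x] P[unfolded P_def], of r] by (simp add: P_def)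
  have d2: "((\<lambda>x. poly (qq N k) (ph N x)) has_real_derivative
      poly (pderiv (qq N k)) y * (1 / (sqrt N * P * sqrt P))) (at x)"
    unfolding y_def P_def by (rule DERIV_chain2[OF poly_DERIV ph_deriv[OF N]])
  have d: "(EF N k has_real_derivative LL N k * (P powr r * (poly (pderiv (qq N k)) y * (1 / (sqrt N * P * sqrt P)))
       + r * P powr (r - 1) * (2 * x / N) * poly (qq N k) y)) (at x)"
    using DERIV_cmult[OF DERIV_mult'[OF d1 d2], of "LL N k"]
    unfolding EF_def P_def y_def r_def .
  have e1: "P powr (r - 1) = P powr r / P" using P by (simp add: powr_diff)
  have e2: "P powr (r - 1/2) = P powr r / sqrt P" using P by (simp add: powr_diff powr_half_sqrt)
  have e3: "- N - real (Suc k) / 2 = r - 1/2" by (simp add: r_def field_simps)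
  have sN: "sqrt N * sqrt N = N" using N by simp
  have sP: "sqrt P * sqrt P = P" using P by simp
  have yy: "y = x / sqrt N / sqrt P" by (simp add: y_def ph_def P_def)
  have w: "1 - y\<^sup>2 = 1 / P" unfolding y_def P_def by (rule ph_sq[OF N])
  have EFS: "EF N (Suc k) x = LL N k / sqrt N * (P powr r / sqrt P) *
        ((1 - y\<^sup>2) * poly (pderiv (qq N k)) y - (2 * N + real k) * y * poly (qq N k) y)"
    unfolding qq_ident[OF N y] EF_def e3 e2[unfolded P_def] by (simp add: P_def y_def)
  define A where "A = P powr r"
  define Q where "Q = poly (qq N k) y"
  define Qd where "Qd = poly (pderiv (qq N k)) y"
  have Aeq: "A * (Qd * (1 / (sqrt N * P * sqrt P))) + (r * (A / P) * (2 * x / N)) * Q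
     = (1 / sqrt N) * (A / sqrt P) * ((1 / P) * Qd - (2 * N + real k) * (x / sqrt N / sqrt P) * Q)"
    using alg2[where sN = "sqrt N" and sP = "sqrt P" and A = A and Qd = Qd and Q = Q and x = x and k = k] N P
    unfolding sN sP r_def[symmetric] by simp
  have "LL N k * (P powr r * (poly (pderiv (qq N k)) y * (1 / (sqrt N * P * sqrt P)))
       + r * P powr (r - 1) * (2 * x / N) * poly (qq N k) y)
     = LL N k * (A * (Qd * (1 / (sqrt N * P * sqrt P))) + (r * (A / P) * (2 * x / N)) * Q)"
    unfolding e1 A_def Q_def Qd_def by simp
  also have "\<dots> = LL N k * ((1 / sqrt N) * (A / sqrt P) * ((1 / P) * Qd - (2 * N + real k) * (x / sqrt N / sqrt P) * Q))"
    by (simp only: Aeq)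
  also have "\<dots> = EF N (Suc k) x"
    unfolding EFS w A_def Q_def Qd_def yy[symmetric] by (simp add: algebra_simps)
  finally have "LL N k * (P powr r * (poly (pderiv (qq N k)) y * (1 / (sqrt N * P * sqrt P)))
       + r * P powr (r - 1) * (2 * x / N) * poly (qq N k) y) = EF N (Suc k) x" .
  with d show "(EF N k has_real_derivative EF N (Suc k) x) (at x)" by simp
qed


lemma neg1_sq[simp]: "((-1::real) ^ n)\<^sup>2 = 1"
  by (simp add: power2_eq_square power_mult_distrib[symmetric])

lemma rel_hermite_eq:
  assumes N: "N > 0"
  shows "rel_hermite N n x = (-1) ^ n * LL N n * (1 + x\<^sup>2 / N) powr (real n / 2) * poly (qq N n) (ph N x)"
proof -
  have P: "1 + x\<^sup>2 / N > 0" using u_pos[OF N] .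
  have "(deriv ^^ n) (\<lambda>t. (1 + t\<^sup>2 / N) powr (- N)) x = EF N n x"
    by (rule hd_deriv[OF open_UNIV hd_E[OF N]]) simp
  moreover have h: "(1 + x\<^sup>2 / N) powr (N + real n) * (1 + x\<^sup>2 / N) powr (- N - real n / 2) = (1 + x\<^sup>2 / N) powr (real n / 2)"
    unfolding powr_add[symmetric] by simp
  ultimately show ?thesis unfolding rel_hermite_def EF_def
  proof -
    assume d: "(deriv ^^ n) (\<lambda>t. (1 + t\<^sup>2 / N) powr (- N)) x = LL N n * ((1 + x\<^sup>2 / N) powr (- N - real n / 2) * poly (qq N n) (ph N x))"
    show "(- 1) ^ n * (1 + x\<^sup>2 / N) powr (N + real n) * (deriv ^^ n) (\<lambda>t. (1 + t\<^sup>2 / N) powr - N) x =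
      (- 1) ^ n * LL N n * (1 + x\<^sup>2 / N) powr (real n / 2) * poly (qq N n) (ph N x)"
      unfolding d h[symmetric] by (simp only: ac_simps)
  qed
qed

lemma gegenbauer_eq:
  assumes N: "N > 0" and y: "y \<in> {-1<..<1}"
  shows "gegenbauer N n y = gegenbauer_alpha N n * (-1) ^ n * poly (qq N n) y"
proof -
  have w: "1 - y\<^sup>2 > 0" using S_pos[OF y] .
  have "(deriv ^^ n) (\<lambda>t. (1 - t\<^sup>2) powr (real n + N - 1/2)) y = GF (real n + N - 1/2) n y"
    by (rule hd_deriv[OF _ hd_G y]) simp
  also have "\<dots> = poly (qq N n) y * (1 - y\<^sup>2) powr (N - 1/2)"
    by (simp add: GF_def qq_def)
  finally have d: "(deriv ^^ n) (\<lambda>t. (1 - t\<^sup>2) powr (real n + N - 1/2)) y = poly (qq N n) y * (1 - y\<^sup>2) powr (N - 1/2)" .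
  have h: "(1 - y\<^sup>2) powr (1/2 - N) * (1 - y\<^sup>2) powr (N - 1/2) = 1"
    using w unfolding powr_add[symmetric] by simp
  have "gegenbauer N n y = gegenbauer_alpha N n * (-1) ^ n * poly (qq N n) y * ((1 - y\<^sup>2) powr (1/2 - N) * (1 - y\<^sup>2) powr (N - 1/2))"
    unfolding gegenbauer_def d by (simp only: ac_simps)
  then show ?thesis unfolding h by simp
qed

lemma alpha_pos: "N > 0 \<Longrightarrow> gegenbauer_alpha N n > 0"
  unfolding gegenbauer_alpha_def by (intro divide_pos_pos mult_pos_pos pochhammer_pos) auto

lemma LL_nz: "N > 0 \<Longrightarrow> LL N n \<noteq> 0"
  by (induction n) (auto simp: cc_def add_pos_nonneg)

lemma f_rel_eq:
  assumes N: "N > 0"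
  shows "f_rel n N x = (LL N n)\<^sup>2 * (1 + x\<^sup>2 / N) powr (- (N + 1)) * (poly (qq N n) (ph N x))\<^sup>2"
proof -
  define P where "P = 1 + x\<^sup>2 / N"
  have P: "P > 0" using u_pos[OF N] by (simp add: P_def)
  have a: "(P powr (real n / 2))\<^sup>2 = P powr real n"
    unfolding power2_eq_square powr_add[symmetric] by simp
  have b: "P powr (- (N + 1 + real n)) * P powr real n = P powr (- (N + 1))"
    unfolding powr_add[symmetric] by simp
  have "f_rel n N x = P powr (- (N + 1 + real n)) * ((LL N n)\<^sup>2 * (P powr (real n / 2))\<^sup>2 * (poly (qq N n) (ph N x))\<^sup>2)"
    unfolding f_rel_def rel_hermite_eq[OF N] P_def[symmetric] by (simp add: power_mult_distrib)
  also have "\<dots> = (LL N n)\<^sup>2 * (P powr (- (N + 1 + real n)) * P powr real n) * (poly (qq N n) (ph N x))\<^sup>2"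
    unfolding a by (simp add: algebra_simps)
  finally have X: "f_rel n N x = (LL N n)\<^sup>2 * (P powr (- (N + 1 + real n)) * P powr real n) * (poly (qq N n) (ph N x))\<^sup>2" .
  show ?thesis unfolding P_def[symmetric] X b ..
qed

lemma g_geg_eq:
  assumes N: "N > 0"
  shows "g_geg n N (ph N x) = (gegenbauer_alpha N n)\<^sup>2 * (1 + x\<^sup>2 / N) powr (1/2 - N) * (poly (qq N n) (ph N x))\<^sup>2"
proof -
  define P where "P = 1 + x\<^sup>2 / N"
  have P: "P > 0" using u_pos[OF N] by (simp add: P_def)
  have w: "1 - (ph N x)\<^sup>2 = 1 / P" using ph_sq[OF N] by (simp add: P_def)
  have e: "(1 / P) powr (N - 1/2) = P powr (1/2 - N)"
  proof -
    have "(1 / P) powr (N - 1/2) = 1 / P powr (N - 1/2)" using P by (simp add: powr_divide)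
    also have "\<dots> = P powr (- (N - 1/2))" by (simp only: powr_minus_divide)
    finally show ?thesis by simp
  qed
  show ?thesis unfolding g_geg_def gegenbauer_eq[OF N ph_range[OF N]] w e P_def[symmetric]
    by (simp add: power_mult_distrib algebra_simps)
qed


definition dph :: "real \<Rightarrow> real \<Rightarrow> real" where
  "dph N x = 1 / (sqrt N * (1 + x\<^sup>2 / N) * sqrt (1 + x\<^sup>2 / N))"

lemma dph_pos: "N > 0 \<Longrightarrow> dph N x > 0"
  unfolding dph_def using u_pos[of N x] by simp

lemma dph_den: "N > 0 \<Longrightarrow> sqrt N * (1 + x\<^sup>2 / N) * sqrt (1 + x\<^sup>2 / N) \<noteq> 0"
  using u_pos[of N x] by simp

lemma u_nz: "N > 0 \<Longrightarrow> 1 + x\<^sup>2 / N \<noteq> (0::real)"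
  using u_pos[of N x] by simp

lemma dph_cont: "N > 0 \<Longrightarrow> continuous_on UNIV (dph N)"
  unfolding dph_def
  by (intro continuous_intros) (simp_all add: dph_den u_nz)

lemma ph_mono: assumes N: "N > 0" and "a \<le> b" shows "ph N a \<le> ph N b"
  using assms(2) by (rule DERIV_nonneg_imp_nondecreasing)
    (use ph_deriv[OF N, unfolded dph_def[symmetric]] dph_pos[OF N] in \<open>metis less_imp_le\<close>)

lemma ph_cont: "N > 0 \<Longrightarrow> continuous_on UNIV (ph N)"
  by (intro continuous_at_imp_continuous_on ballI DERIV_isCont) (rule ph_deriv)

lemma ph_meas[measurable]: "N > 0 \<Longrightarrow> ph N \<in> borel_measurable borel"
  by (rule borel_measurable_continuous_onI[OF ph_cont])

lemma ph_inv:
  assumes N: "N > 0" and y: "y \<in> {-1<..<1}"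
  shows "ph N (sqrt N * y / sqrt (1 - y\<^sup>2)) = y"
proof -
  define s where "s = sqrt (1 - y\<^sup>2)"
  have w: "1 - y\<^sup>2 > 0" using S_pos[OF y] .
  have s: "s > 0" "s * s = 1 - y\<^sup>2" using w by (auto simp: s_def)
  have a1: "(sqrt N * y / s)\<^sup>2 / N = y\<^sup>2 / (s * s)"
    using N s by (simp add: power_divide power_mult_distrib power2_eq_square[of s])
  have a2: "1 + y\<^sup>2 / (s * s) = (s * s + y\<^sup>2) / (s * s)"
    using s(1) by (simp add: field_simps)
  have "1 + (sqrt N * y / s)\<^sup>2 / N = 1 / (s * s)"
    unfolding a1 a2 using s by simp
  then have a: "sqrt (1 + (sqrt N * y / s)\<^sup>2 / N) = 1 / s"
    using s by (simp add: real_sqrt_divide real_sqrt_mult s_def)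
  show ?thesis unfolding ph_def s_def[symmetric] a using N s by simp
qed

lemma ph_union: assumes N: "N > 0" shows "(\<Union>m. {ph N (- real m)..ph N (real m)}) = {-1<..<1}"
proof
  show "(\<Union>m. {ph N (- real m)..ph N (real m)}) \<subseteq> {-1<..<1}"
  proof
    fix y assume "y \<in> (\<Union>m. {ph N (- real m)..ph N (real m)})"
    then obtain m where m: "ph N (- real m) \<le> y" "y \<le> ph N (real m)" by auto
    then show "y \<in> {-1<..<1}" using ph_range[OF N, of "- real m"] ph_range[OF N, of "real m"] by auto
  qed
next
  show "{-1<..<1} \<subseteq> (\<Union>m. {ph N (- real m)..ph N (real m)})"
  proof
    fix y :: real assume y: "y \<in> {-1<..<1}"
    define z where "z = sqrt N * y / sqrt (1 - y\<^sup>2)"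
    obtain m :: nat where m: "\<bar>z\<bar> \<le> real m" using real_arch_simple by blast
    have "ph N (- real m) \<le> ph N z" "ph N z \<le> ph N (real m)"
      using m by (auto intro!: ph_mono[OF N])
    then show "y \<in> (\<Union>m. {ph N (- real m)..ph N (real m)})"
      unfolding z_def ph_inv[OF N y] by auto
  qed
qed

lemma subst_line:
  fixes h :: "real \<Rightarrow> real"
  assumes N: "N > 0" and h[measurable]: "h \<in> borel_measurable borel"
  shows "(\<integral>\<^sup>+y. ennreal (h y) * indicator {-1<..<1} y \<partial>lborel) = (\<integral>\<^sup>+x. ennreal (h (ph N x) * dph N x) \<partial>lborel)"
proof -
  have pm[measurable]: "ph N \<in> borel_measurable borel" by (rule ph_meas[OF N])
  have dm[measurable]: "dph N \<in> borel_measurable borel"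
    by (rule borel_measurable_continuous_onI[OF dph_cont[OF N]])
  define D1 where "D1 = density lborel (\<lambda>y. ennreal (h y))"
  define D2 where "D2 = density lborel (\<lambda>x. ennreal (h (ph N x) * dph N x))"
  have eq: "emeasure D1 {ph N (- real m)..ph N (real m)} = emeasure D2 {- real m..real m}" for m
  proof -
    have "emeasure D1 {ph N (- real m)..ph N (real m)} = (\<integral>\<^sup>+x. ennreal (h x) * indicator {ph N (- real m)..ph N (real m)} x \<partial>lborel)"
      unfolding D1_def by (rule emeasure_density) auto
    also have "\<dots> = (\<integral>\<^sup>+x. ennreal (h x * indicator {ph N (- real m)..ph N (real m)} x) \<partial>lborel)"
      by (intro nn_integral_cong) (auto split: split_indicator)
    also have "\<dots> = (\<integral>\<^sup>+x. ennreal (h (ph N x) * dph N x * indicator {- real m..real m} x) \<partial>lborel)"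
      by (rule nn_integral_substitution)
         (auto simp: set_borel_measurable_def intro: ph_deriv[OF N, unfolded dph_def[symmetric]] continuous_on_subset[OF dph_cont[OF N]]
               less_imp_le[OF dph_pos[OF N]])
    also have "\<dots> = (\<integral>\<^sup>+x. ennreal (h (ph N x) * dph N x) * indicator {- real m..real m} x \<partial>lborel)"
      by (intro nn_integral_cong) (auto split: split_indicator)
    also have "\<dots> = emeasure D2 {- real m..real m}"
      unfolding D2_def by (rule emeasure_density[symmetric]) auto
    finally show ?thesis .
  qed
  have inc1: "incseq (\<lambda>m. {ph N (- real m)..ph N (real m)})"
    by (auto simp: incseq_def intro: order_trans[OF ph_mono[OF N]] order_trans[OF _ ph_mono[OF N]])
  have inc2: "incseq (\<lambda>m::nat. {- real m..real m})"
    by (auto simp: incseq_def)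
  have u2: "(\<Union>m::nat. {- real m..real m}) = UNIV"
  proof -
    have "x \<in> (\<Union>m::nat. {- real m..real m})" for x :: real
    proof -
      obtain m :: nat where "\<bar>x\<bar> \<le> real m" using real_arch_simple by blast
      then have "- real m \<le> x \<and> x \<le> real m" by (simp add: abs_le_iff)
      then show ?thesis by (intro UN_I[where a = m]) auto
    qed
    then show ?thesis by auto
  qed
  have "emeasure D1 {-1<..<1} = (SUP m. emeasure D1 {ph N (- real m)..ph N (real m)})"
    unfolding ph_union[OF N, symmetric]
    by (rule SUP_emeasure_incseq[symmetric]) (auto simp: D1_def inc1)
  also have "\<dots> = (SUP m. emeasure D2 {- real m..real m})" by (simp add: eq)
  also have "\<dots> = emeasure D2 UNIV"
    unfolding u2[symmetric]
    by (rule SUP_emeasure_incseq) (auto simp: D2_def inc2)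
  finally have fin: "emeasure D1 {-1<..<1} = emeasure D2 UNIV" .
  have "emeasure D1 {-1<..<1} = (\<integral>\<^sup>+y. ennreal (h y) * indicator {-1<..<1} y \<partial>lborel)"
    unfolding D1_def by (rule emeasure_density) auto
  moreover have "emeasure D2 UNIV = (\<integral>\<^sup>+x. ennreal (h (ph N x) * dph N x) * indicator UNIV x \<partial>lborel)"
    unfolding D2_def by (rule emeasure_density) auto
  ultimately show ?thesis using fin by simp
qed


definition gg :: "nat \<Rightarrow> real \<Rightarrow> real \<Rightarrow> real" where
  "gg n N y = (gegenbauer_alpha N n)\<^sup>2 * (1 - y\<^sup>2) powr (N - 1/2) * (poly (qq N n) y)\<^sup>2"

lemma gg_eq: "N > 0 \<Longrightarrow> y \<in> {-1<..<1} \<Longrightarrow> g_geg n N y = gg n N y"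
  unfolding g_geg_def gg_def gegenbauer_eq by (simp add: power_mult_distrib)

lemma poly_meas[measurable]: "(\<lambda>y. poly p y) \<in> borel_measurable (borel :: real measure)"
  by (intro borel_measurable_continuous_onI) (auto intro: continuous_intros)

lemma gg_meas[measurable]: "gg n N \<in> borel_measurable borel"
  unfolding gg_def by measurable

lemma alg3:
  fixes A B Q L a sN P sP c :: real
  assumes "a \<noteq> 0" "sN > 0" "P > 0" "sP > 0" "B = A * (P * sP)"
  shows "c * (L\<^sup>2 * A * Q) = (c * L\<^sup>2 * sN / a\<^sup>2) * (a\<^sup>2 * B * Q) * (1 / (sN * P * sP))"
  using assms by (simp add: field_simps power2_eq_square)

lemma key:
  assumes N: "N > 0"
  shows "c * f_rel n N x = (c * (LL N n)\<^sup>2 * sqrt N / (gegenbauer_alpha N n)\<^sup>2) * gg n N (ph N x) * dph N x"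
proof -
  define P where "P = 1 + x\<^sup>2 / N"
  have P: "P > 0" using u_pos[OF N] by (simp add: P_def)
  have e: "P powr (1/2 - N) = P powr (- (N + 1)) * (P * sqrt P)"
  proof -
    have "P powr (1/2 - N) = P powr (- (N + 1)) * P powr 1 * P powr (1/2)"
      unfolding powr_add[symmetric] by simp
    then show ?thesis using P by (simp add: powr_half_sqrt)
  qed
  have a: "gegenbauer_alpha N n \<noteq> 0" using alpha_pos[OF N, of n] by simp
  show ?thesis
    unfolding f_rel_eq[OF N] gg_eq[OF N ph_range[OF N], symmetric] g_geg_eq[OF N] dph_def P_def[symmetric]
    by (rule alg3[where a = "gegenbauer_alpha N n" and sN = "sqrt N" and P = P and sP = "sqrt P"
         and A = "P powr (- (N + 1))" and B = "P powr (1/2 - N)" and Q = "(poly (qq N n) (ph N x))\<^sup>2"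
         and c = c and L = "LL N n"]) (use a N P e in auto)
qed


theorem theorem4:
  fixes M :: "'a measure" and X :: "'a \<Rightarrow> real" and N :: real and n :: nat and c :: real
  assumes "prob_space M" and "N > 0" and "c > 0"
    and "distributed M lborel X (\<lambda>x. ennreal (c * f_rel n N x))"
  shows "\<exists>d>0. distributed M lborel
           (\<lambda>\<omega>. (X \<omega> / sqrt N) / sqrt (1 + (X \<omega>)\<^sup>2 / N))
           (\<lambda>y. ennreal (d * indicator {-1<..<1} y * g_geg n N y))"
proof -
  have N: "N > 0" by fact
  let ?S = "{-1<..<1::real}"
  define d where "d = c * (LL N n)\<^sup>2 * sqrt N / (gegenbauer_alpha N n)\<^sup>2"
  have dpos: "d > 0" unfolding d_def using assms(3) N LL_nz[OF N, of n] alpha_pos[OF N, of n]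
    by (intro divide_pos_pos mult_pos_pos) simp_all
  from assms(4) have distX: "distr M lborel X = density lborel (\<lambda>x. ennreal (c * f_rel n N x))"
    and Fm[measurable]: "(\<lambda>x. ennreal (c * f_rel n N x)) \<in> borel_measurable lborel"
    and Xm[measurable]: "X \<in> measurable M lborel"
    unfolding distributed_def by auto
  have Xb[measurable]: "X \<in> borel_measurable M" using Xm by simp
  have pm[measurable]: "ph N \<in> borel_measurable borel" by (rule ph_meas[OF N])
  define G where "G = (\<lambda>y. ennreal (d * indicator ?S y * g_geg n N y))"
  have G': "G = (\<lambda>y. ennreal (d * indicator ?S y * gg n N y))"
    unfolding G_def by (auto simp: gg_eq[OF N] split: split_indicator)
  have Gm[measurable]: "G \<in> borel_measurable lborel"
    unfolding G' by measurable
  have Y: "(\<lambda>\<omega>. (X \<omega> / sqrt N) / sqrt (1 + (X \<omega>)\<^sup>2 / N)) = (\<lambda>\<omega>. ph N (X \<omega>))"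
    by (simp add: ph_def)
  have Ym[measurable]: "(\<lambda>\<omega>. ph N (X \<omega>)) \<in> measurable M lborel"
    using measurable_compose[OF Xb pm] by simp
  have "distr M lborel (\<lambda>\<omega>. ph N (X \<omega>)) = distr (distr M lborel X) lborel (ph N)"
    by (subst distr_distr) (auto simp: o_def)
  also have "\<dots> = density lborel G"
  proof (rule measure_eqI)
    fix A assume "A \<in> sets (distr (distr M lborel X) lborel (ph N))"
    then have A[measurable]: "A \<in> sets borel" by simp
    define h where "h = (\<lambda>y. d * gg n N y * indicator A y)"
    have hm[measurable]: "h \<in> borel_measurable borel" unfolding h_def by measurable
    have "emeasure (distr (distr M lborel X) lborel (ph N)) A
        = emeasure (density lborel (\<lambda>x. ennreal (c * f_rel n N x))) (ph N -` A)"
      unfolding distX by (subst emeasure_distr) auto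
    also have "\<dots> = (\<integral>\<^sup>+x. ennreal (c * f_rel n N x) * indicator (ph N -` A) x \<partial>lborel)"
    proof (rule emeasure_density)
      have "ph N -` A \<inter> space borel \<in> sets borel" using measurable_sets[OF pm A] .
      then show "ph N -` A \<in> sets lborel" by simp
    qed simp
    also have "\<dots> = (\<integral>\<^sup>+x. ennreal (h (ph N x) * dph N x) \<partial>lborel)"
    proof (intro nn_integral_cong)
      fix x
      show "ennreal (c * f_rel n N x) * indicator (ph N -` A) x = ennreal (h (ph N x) * dph N x)"
        unfolding h_def key[OF N, of c n x] d_def[symmetric]
        by (auto split: split_indicator simp: algebra_simps)
    qed
    also have "\<dots> = (\<integral>\<^sup>+y. ennreal (h y) * indicator ?S y \<partial>lborel)"
      by (rule subst_line[OF N hm, symmetric])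
    also have "\<dots> = (\<integral>\<^sup>+y. G y * indicator A y \<partial>lborel)"
      unfolding G' h_def
      by (intro nn_integral_cong) (auto split: split_indicator)
    also have "\<dots> = emeasure (density lborel G) A"
      by (rule emeasure_density[symmetric]) auto
    finally show "emeasure (distr (distr M lborel X) lborel (ph N)) A = emeasure (density lborel G) A" .
  qed simp
  finally have "distr M lborel (\<lambda>\<omega>. ph N (X \<omega>)) = density lborel G" .
  then have "distributed M lborel (\<lambda>\<omega>. ph N (X \<omega>)) G"
    unfolding distributed_def using Gm Ym by simp
  then show ?thesis unfolding Y G_def using dpos by blast
qed

end
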